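(* Let $q=2v+1$ be a prime power where $v=k_1k_2\cdots k_r$ with $k_1,\dots,k_r$ pairwise coprime odd integers, each $k_i\ge 3$. Then there exists a $(v,\{k_1,\dots,k_r\})$ Heffter space over the additive group of $\mathbb F_q$.
   Context: A half-set of an abelian group $G$ of odd order $2v+1\ge7$ is a subset $V\subseteq G\setminus\{0\}$ containing exactly one element of each pair $\{g,-g\}$, $g\ne0$. A $(v,k)$ Heffter system on $V$ is a partition of $V$ into blocks of size $k$, each summing to $0$ in $G$. A $(v,\{k_1,\dots,k_r\})$ Heffter space over $G$ is a partial linear space (any two distinct points lie in at most one block) with point set a half-set $V$ of $G$, together with a resolution of its blocks into $r$ parallel classes $\mathcal P_1,\dots,\mathcal P_r$ (each a partition of $V$), where $\mathcal P_i$ is a $(v,k_i)$ Heffter system. *)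

theory Defs
  imports Main "HOL-Library.Disjoint_Sets" "HOL-Computational_Algebra.Primes"
begin

definition half_set :: "('a::ab_group_add) set \<Rightarrow> bool" where
  "half_set V \<longleftrightarrow> 0 \<notin> V \<and> (\<forall>g. g \<noteq> 0 \<longrightarrow> (g \<in> V \<longleftrightarrow> - g \<notin> V))"

definition heffter_system :: "('a::ab_group_add) set \<Rightarrow> nat \<Rightarrow> 'a set set \<Rightarrow> bool" where
  "heffter_system V k P \<longleftrightarrow> partition_on V P \<and> (\<forall>B\<in>P. card B = k \<and> \<Sum>B = 0)"

definition heffter_space :: "('a::ab_group_add) set \<Rightarrow> nat list \<Rightarrow> (nat \<Rightarrow> 'a set set) \<Rightarrow> bool" where
  "heffter_space V ks P \<longleftrightarrow>
     half_set V \<and>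
     (\<forall>i < length ks. heffter_system V (ks ! i) (P i)) \<and>
     (\<forall>x y. x \<noteq> y \<longrightarrow>
        (\<forall>B1 \<in> (\<Union>i<length ks. P i). \<forall>B2 \<in> (\<Union>i<length ks. P i).
           x \<in> B1 \<and> y \<in> B1 \<and> x \<in> B2 \<and> y \<in> B2 \<longrightarrow> B1 = B2))"

end

theory Submission
  imports Defs "HOL-Algebra.Multiplicative_Group"
begin

definition type_ring :: "'a::field ring"
  where "type_ring = \<lparr>carrier = UNIV, monoid.mult = (\<lambda>x y. x * y), one = 1,
    ring.zero = 0, add = (\<lambda>x y. x + y)\<rparr>"

lemma type_ring_field: "field (type_ring :: 'a::field ring)"
proof -
  have "\<exists>y. x + y = 0" for x :: 'a
    using add.right_inverse by blast
  moreover have "x \<noteq> 0 \<Longrightarrow> \<exists>y. x * y = 1" for x :: 'a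
    by (rule exI[of _ "inverse x"]) auto
  ultimately show ?thesis
    unfolding type_ring_def
    by unfold_locales (auto simp: algebra_simps Units_def)
qed

lemma type_pow_eq: "x [^]\<^bsub>(type_ring :: 'a::field ring)\<^esub> (n::nat) = x ^ n"
  by (induction n) (simp_all add: type_ring_def mult.commute)

lemma gen_type: "\<exists>g::'a::{finite,field}. \<forall>x. x \<noteq> 0 \<longrightarrow> (\<exists>i::nat. x = g^i)"
proof -
  let ?R = "type_ring :: 'a ring"
  interpret F: field ?R by (rule type_ring_field)
  have "finite (carrier ?R)" by (simp add: type_ring_def)
  from F.finite_field_mult_group_has_gen[OF this] obtain a where
    a: "carrier (mult_of ?R) = {a[^]\<^bsub>?R\<^esub>i | i::nat . i \<in> UNIV}"
    by blast
  have c: "carrier (mult_of ?R) = UNIV - {0}" by (simp add: type_ring_def)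
  have "\<exists>i::nat. x = a^i" if "x \<noteq> 0" for x
  proof -
    have "x \<in> carrier (mult_of ?R)" using c that by blast
    then obtain i::nat where "x = a[^]\<^bsub>?R\<^esub>i" using a by blast
    then have "x = a ^ i" by (simp only: type_pow_eq)
    then show ?thesis by blast
  qed
  then show ?thesis by blast
qed

lemma pow_cancel_diff:
  fixes g :: "'a::field"
  assumes "g \<noteq> 0" "i \<le> j" "g^i = g^j"
  shows "g^(j-i) = 1"
proof -
  have "g^j = g^i * g^(j-i)" using assms(2) by (simp add: power_add[symmetric])
  then show ?thesis using assms by simp
qed

lemma gen_order:
  fixes g :: "'a::{finite,field}"
  assumes gen: "\<forall>x. x \<noteq> 0 \<longrightarrow> (\<exists>i::nat. x = g^i)"
    and c3: "card (UNIV::'a set) > 2"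
  shows "g^i = g^j \<longleftrightarrow> i mod (card (UNIV::'a set) - 1) = j mod (card (UNIV::'a set) - 1)"
proof -
  define N where "N = card (UNIV::'a set) - 1"
  define S where "S = (UNIV::'a set) - {0}"
  have cS: "card S = N" unfolding S_def N_def by (simp add: card_Diff_singleton)
  have g0: "g \<noteq> 0"
  proof
    assume "g = 0"
    then have "UNIV \<subseteq> {0, 1::'a}" using gen by (auto simp: power_0_left split: if_splits)
    then have "card (UNIV::'a set) \<le> card {0, 1::'a}" by (intro card_mono) simp_all
    then have "card (UNIV::'a set) \<le> 2" by simp
    then show False using c3 by simp
  qed
  have img: "(\<lambda>i. g^i) ` {..N} \<subseteq> S" using g0 by (auto simp: S_def)
  have "\<not> inj_on (\<lambda>i. g^i) {..N}"
  proof
    assume "inj_on (\<lambda>i. g^i) {..N}"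
    then have "card ((\<lambda>i. g^i) ` {..N}) = Suc N" by (simp add: card_image)
    moreover have "card ((\<lambda>i. g^i) ` {..N}) \<le> N" using img cS card_mono[of S] by (simp add: S_def)
    ultimately show False by simp
  qed
  then obtain i0 j0 where ij: "i0 < j0" "g^i0 = g^j0"
    unfolding inj_on_def by (metis linorder_neqE_nat)
  then have "g^(j0-i0) = 1" using pow_cancel_diff[OF g0] by simp
  then have ex: "\<exists>d. 0 < d \<and> g^d = 1" using ij by (intro exI[of _ "j0-i0"]) simp
  define d where "d = (LEAST d. 0 < d \<and> g^d = 1)"
  have d: "0 < d" "g^d = 1" using LeastI_ex[OF ex] unfolding d_def by auto
  have dmin: "g^e \<noteq> 1" if "0 < e" "e < d" for e
    using not_less_Least[of e "\<lambda>d. 0 < d \<and> g^d = 1"] that unfolding d_def by auto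
  have pmod: "g^k = g^(k mod d)" for k
  proof -
    have "g^k = g^(d * (k div d) + k mod d)" by simp
    also have "\<dots> = (g^d)^(k div d) * g^(k mod d)" by (simp only: power_add power_mult)
    finally have "g^k = (g^d)^(k div d) * g^(k mod d)" .
    then show ?thesis using d by simp
  qed
  have inj: "inj_on (\<lambda>i. g^i) {..<d}"
  proof (rule inj_onI)
    fix a b assume ab: "a \<in> {..<d}" "b \<in> {..<d}" "g^a = g^b"
    show "a = b"
    proof (rule ccontr)
      assume "a \<noteq> b"
      then consider "a < b" | "b < a" by linarith
      then show False
      proof cases
        case 1 then have "g^(b-a) = 1" using pow_cancel_diff[OF g0, of a b] ab by simp
        moreover have "b - a < d" using ab(2) by auto
        ultimately show False using dmin[of "b-a"] 1 by auto
      next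
        case 2 then have "g^(a-b) = 1" using pow_cancel_diff[OF g0, of b a] ab by simp
        moreover have "a - b < d" using ab(1) by auto
        ultimately show False using dmin[of "a-b"] 2 by auto
      qed
    qed
  qed
  have "S = (\<lambda>i. g^i) ` {..<d}"
  proof
    show "S \<subseteq> (\<lambda>i. g^i) ` {..<d}"
    proof
      fix x assume "x \<in> S"
      then obtain k where "x = g^k" using gen by (auto simp: S_def)
      then have "x = g^(k mod d)" using pmod by simp
      then show "x \<in> (\<lambda>i. g^i) ` {..<d}" using d by auto
    qed
    show "(\<lambda>i. g^i) ` {..<d} \<subseteq> S" using g0 by (auto simp: S_def)
  qed
  then have "N = d" using cS inj by (simp add: card_image)
  have "g^i = g^j \<longleftrightarrow> g^(i mod d) = g^(j mod d)" by (subst (1 2) pmod) (rule refl)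
  also have "\<dots> \<longleftrightarrow> i mod d = j mod d" using inj d(1) unfolding inj_on_def by auto
  finally show ?thesis using \<open>N = d\<close> N_def by simp
qed
lemma prod2_dvd:
  fixes ks :: "nat list"
  assumes "i < length ks" "j < length ks" "i \<noteq> j"
  shows "ks!i * ks!j dvd prod_list ks"
proof -
  have e: "prod_list ks = (\<Prod>n\<in>{0..<length ks}. ks!n)" by (rule prod.list_conv_set_nth)
  have "(\<Prod>n\<in>{0..<length ks}. ks!n) = ks!i * (\<Prod>n\<in>{0..<length ks}-{i}. ks!n)"
    using assms by (intro prod.remove) auto
  also have "(\<Prod>n\<in>{0..<length ks}-{i}. ks!n) = ks!j * (\<Prod>n\<in>{0..<length ks}-{i}-{j}. ks!n)"
    using assms by (intro prod.remove) auto
  finally show ?thesis using e by simp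
qed

lemma odd_prod_list: "\<forall>k\<in>set ks. odd (k::nat) \<Longrightarrow> odd (prod_list ks)"
  by (induction ks) auto

lemma crt_aux:
  fixes a b k1 k2 u :: nat
  assumes cop: "coprime k1 k2"
    and h1: "a mod (k2*u) = b mod (k2*u)" and h2: "a mod (k1*u) = b mod (k1*u)"
  shows "a mod (k1*k2*u) = b mod (k1*k2*u)"
proof -
  define D where "D = int a - int b"
  have d1: "int (k2*u) dvd D" using h1 unfolding D_def
    by (metis mod_eq_dvd_iff of_nat_mod)
  have d2: "int (k1*u) dvd D" using h2 unfolding D_def
    by (metis mod_eq_dvd_iff of_nat_mod)
  obtain e where e: "D = int (k2*u) * e" using d1 by blast
  have "int (k1*k2*u) dvd D"
  proof (cases "u = 0")
    case True then show ?thesis using d1 by simp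
  next
    case False
    have "int k1 * int u dvd int k2 * int u * e" using d2 e by simp
    then have "int k1 dvd int k2 * e" using False by (simp add: mult.commute mult.left_commute)
    then have "int k1 dvd e" using cop
      by (metis coprime_dvd_mult_right_iff coprime_int_iff)
    then obtain f where "e = int k1 * f" by blast
    then have "D = int (k1*k2*u) * f" using e by (simp add: algebra_simps)
    then show ?thesis by simp
  qed
  then show ?thesis unfolding D_def by (metis mod_eq_dvd_iff of_nat_mod of_nat_eq_iff)
qed
definition blk :: "'a::field \<Rightarrow> nat \<Rightarrow> nat \<Rightarrow> 'a set" where
  "blk h w m = {y. \<exists>x. y = h^x \<and> x mod w = m mod w}"

definition cls :: "'a::field \<Rightarrow> nat \<Rightarrow> nat \<Rightarrow> 'a set set" where
  "cls h k v = (blk h (v div k)) ` {..<v div k}"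

locale hcon =
  fixes h :: "'a::field" and v :: nat
  assumes hpow: "\<And>a b. h^a = h^b \<longleftrightarrow> a mod v = b mod v"
    and h0: "h \<noteq> 0" and vpos: "v > 0"
begin

lemma memblk: assumes "w dvd v" shows "h^z \<in> blk h w m \<longleftrightarrow> z mod w = m mod w"
proof
  assume "h^z \<in> blk h w m"
  then obtain x where "h^z = h^x" "x mod w = m mod w" unfolding blk_def by auto
  then have "z mod v = x mod v" using hpow by simp
  then have "z mod v mod w = x mod v mod w" by simp
  then show "z mod w = m mod w" using assms \<open>x mod w = m mod w\<close> by (simp add: mod_mod_cancel)
qed (auto simp: blk_def)

lemma blk_sub: "blk h w m \<subseteq> range (\<lambda>n. h^n)"
  unfolding blk_def by auto

lemma blk_img:
  assumes kw: "k*w = v" and m: "m < w"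
  shows "blk h w m = (\<lambda>t. h^(m+w*t)) ` {..<k}"
proof
  show "(\<lambda>t. h^(m+w*t)) ` {..<k} \<subseteq> blk h w m"
    unfolding blk_def using m by auto
  show "blk h w m \<subseteq> (\<lambda>t. h^(m+w*t)) ` {..<k}"
  proof
    fix y assume "y \<in> blk h w m"
    then obtain x where y: "y = h^x" and xm: "x mod w = m mod w" unfolding blk_def by auto
    define s where "s = x mod v"
    have wv: "w dvd v" using kw by (metis dvd_triv_right)
    have "y = h^s" using y hpow unfolding s_def by simp
    have "s mod w = m" using xm m wv unfolding s_def by (simp add: mod_mod_cancel)
    moreover have "s = w * (s div w) + s mod w" by simp
    ultimately have s: "s = m + w * (s div w)" by simp
    have "s < v" using vpos unfolding s_def by simp
    then have "s div w < k" using kw m by (simp add: div_less_iff_less_mult mult.commute)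
    then show "y \<in> (\<lambda>t. h^(m+w*t)) ` {..<k}" using \<open>y = h^s\<close> s
      by (intro image_eqI[of _ _ "s div w"]) auto
  qed
qed

lemma blk_inj:
  assumes kw: "k*w = v" and m: "m < w"
  shows "inj_on (\<lambda>t. h^(m+w*t)) {..<k}"
proof (rule inj_onI)
  fix a b assume a: "a \<in> {..<k}" and b: "b \<in> {..<k}" and e: "h^(m+w*a) = h^(m+w*b)"
  have "m + w*a < v"
  proof -
    have "w * Suc a \<le> w * k" using a by (intro mult_le_mono2) simp
    then show ?thesis using m kw by (simp add: mult.commute)
  qed
  moreover have "m + w*b < v"
  proof -
    have "w * Suc b \<le> w * k" using b by (intro mult_le_mono2) simp
    then show ?thesis using m kw by (simp add: mult.commute)
  qed
  ultimately have "m + w*a = m + w*b" using e hpow by simp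
  then show "a = b" using m by simp
qed

lemma blk_card:
  assumes kw: "k*w = v" and m: "m < w"
  shows "card (blk h w m) = k"
  using blk_img[OF assms] blk_inj[OF assms] by (simp add: card_image)

lemma blk_sum:
  assumes kw: "k*w = v" and m: "m < w" and k2: "k \<ge> 2"
  shows "\<Sum>(blk h w m) = 0"
proof -
  have "\<Sum>(blk h w m) = (\<Sum>t<k. h^(m+w*t))"
    using blk_img[OF kw m] blk_inj[OF kw m] by (simp add: sum.reindex)
  also have "\<dots> = h^m * (\<Sum>t<k. (h^w)^t)"
    by (simp add: sum_distrib_left power_add power_mult)
  also have "(\<Sum>t<k. (h^w)^t) = 0"
  proof -
    have wpos: "w > 0" using m by simp
    have "1*w < k*w" using k2 wpos by (intro mult_strict_right_mono) auto
    then have "w < v" using kw by simp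
    have z1: "h^w \<noteq> 1"
    proof
      assume "h^w = 1"
      then have "h^w = h^0" by simp
      then have "w mod v = 0 mod v" using hpow by blast
      then show False using \<open>w < v\<close> wpos by simp
    qed
    have "(h^w)^k = h^(w*k)" by (rule power_mult[symmetric])
    also have "w*k = v" using kw by (simp only: mult.commute)
    finally have "(h^w)^k = h^v" .
    also have "\<dots> = h^0" using hpow[of v 0] by simp
    finally have hk: "(h^w)^k = 1" by simp
    have "(\<Sum>t<k. (h^w)^t) = ((h^w)^k - 1) / (h^w - 1)" by (rule geometric_sum[OF z1])
    also have "\<dots> = 0" by (simp only: hk diff_self div_0)
    finally show ?thesis .
  qed
  finally show ?thesis by simp
qed

lemma cls_hs:
  assumes kv: "k dvd v" and k2: "k \<ge> 2"
  shows "heffter_system (range (\<lambda>n. h^n)) k (cls h k v)"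
proof -
  define w where "w = v div k"
  have kw: "k*w = v" using kv unfolding w_def by simp
  have wv: "w dvd v" using kw by (metis dvd_triv_right)
  have wpos: "w > 0" using kw vpos by (metis gr0I mult_0_right)
  have C: "cls h k v = blk h w ` {..<w}" unfolding cls_def w_def by simp
  have U: "\<Union>(blk h w ` {..<w}) = range (\<lambda>n. h^n)"
  proof
    show "\<Union>(blk h w ` {..<w}) \<subseteq> range (\<lambda>n. h^n)"
      using blk_sub by (simp add: UN_subset_iff)
    show "range (\<lambda>n. h^n) \<subseteq> \<Union>(blk h w ` {..<w})"
    proof
      fix y assume "y \<in> range (\<lambda>n. h^n)"
      then obtain z where z: "y = h^z" by auto
      have "h^z \<in> blk h w (z mod w)" by (simp only: memblk[OF wv] mod_mod_trivial)
      moreover have "z mod w \<in> {..<w}" using wpos by simp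
      ultimately show "y \<in> \<Union>(blk h w ` {..<w})" unfolding z by (rule UN_I[rotated])
    qed
  qed
  have D: "disjoint (blk h w ` {..<w})"
    unfolding disjoint_def
  proof (intro ballI impI)
    fix A B assume A: "A \<in> blk h w ` {..<w}" and B: "B \<in> blk h w ` {..<w}" and ne: "A \<noteq> B"
    show "A \<inter> B = {}"
    proof (rule ccontr)
      assume "A \<inter> B \<noteq> {}"
      then obtain y where y: "y \<in> A" "y \<in> B" by blast
      obtain m1 where m1: "A = blk h w m1" using A by (rule imageE)
      obtain m2 where m2: "B = blk h w m2" using B by (rule imageE)
      have "y \<in> range (\<lambda>n. h^n)" using y(1) m1 blk_sub by blast
      then obtain z where z: "y = h^z" by blast
      have "z mod w = m1 mod w" using y(1) unfolding m1 z by (simp only: memblk[OF wv])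
      moreover have "z mod w = m2 mod w" using y(2) unfolding m2 z by (simp only: memblk[OF wv])
      ultimately have "blk h w m1 = blk h w m2" unfolding blk_def by simp
      then show False using ne m1 m2 by simp
    qed
  qed
  have E: "{} \<notin> blk h w ` {..<w}"
  proof
    assume "{} \<in> blk h w ` {..<w}"
    then obtain m where "{} = blk h w m" by (rule imageE)
    moreover have "h^m \<in> blk h w m" by (simp only: memblk[OF wv])
    ultimately show False by simp
  qed
  have CS: "\<forall>B\<in>blk h w ` {..<w}. card B = k \<and> \<Sum>B = 0"
  proof
    fix B assume "B \<in> blk h w ` {..<w}"
    then obtain m where m: "m < w" "B = blk h w m" by auto
    show "card B = k \<and> \<Sum>B = 0" using blk_card[OF kw m(1)] blk_sum[OF kw m(1) k2] m(2) by simp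
  qed
  show ?thesis unfolding heffter_system_def partition_on_def C using U D E CS by blast
qed

end

theorem theorem3p2:
  fixes ks :: "nat list"
  assumes "ks \<noteq> []"
    and "\<forall>k \<in> set ks. odd k \<and> k \<ge> 3"
    and "\<forall>i < length ks. \<forall>j < length ks. i \<noteq> j \<longrightarrow> coprime (ks ! i) (ks ! j)"
    and "\<exists>p n. prime (p::nat) \<and> n > 0 \<and> 2 * prod_list ks + 1 = p ^ n"
    and "card (UNIV :: ('a::{finite, field}) set) = 2 * prod_list ks + 1"
  shows "\<exists>(V :: 'a set) P. heffter_space V ks P"
proof -
  note ne = assms(1) and ksodd = assms(2) and cop = assms(3) and cardU = assms(5)
  define v where "v = prod_list ks"
  have vodd: "odd v" unfolding v_def using ksodd odd_prod_list by blast
  have vpos: "v > 0" using vodd by (metis odd_pos)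
  have kdv: "k dvd v" if "k \<in> set ks" for k unfolding v_def using that by (rule prod_list_dvd)
  obtain k0 where k0: "k0 \<in> set ks" using ne by (cases ks) auto
  have "k0 \<le> v" using kdv[OF k0] vpos by (rule dvd_imp_le)
  then have v3: "v \<ge> 3" using ksodd k0 by auto
  obtain g :: 'a where gen: "\<forall>x. x \<noteq> 0 \<longrightarrow> (\<exists>i::nat. x = g^i)" using gen_type by blast
  have cU: "card (UNIV :: 'a set) - 1 = 2 * v" using cardU unfolding v_def by simp
  have "card (UNIV :: 'a set) > 2" using cardU v3 unfolding v_def by simp
  then have gpow: "g^i = g^j \<longleftrightarrow> i mod (2*v) = j mod (2*v)" for i j
    using gen_order[OF gen] cU by simp
  have g0: "g \<noteq> 0"
  proof
    assume "g = 0"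
    then have "g^1 = g^2" by simp
    then have "1 mod (2*v) = 2 mod (2*v)" using gpow by blast
    then show False using v3 by simp
  qed
  define h where "h = g^2"
  have hg: "h^n = g^(2*n)" for n unfolding h_def by (simp add: power_mult)
  have hpow: "h^a = h^b \<longleftrightarrow> a mod v = b mod v" for a b
  proof -
    have "h^a = h^b \<longleftrightarrow> (2*a) mod (2*v) = (2*b) mod (2*v)" unfolding hg by (rule gpow)
    also have "\<dots> \<longleftrightarrow> a mod v = b mod v" by (simp only: mod_mult_mult1) simp
    finally show ?thesis .
  qed
  have h0: "h \<noteq> 0" unfolding h_def using g0 by simp
  interpret hcon h v using hpow h0 vpos by unfold_locales auto
  define V where "V = range (\<lambda>n. h^n)"
  define P where "P = (\<lambda>i. cls h (ks!i) v)"
  have gv: "g^v = -1"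
  proof -
    have "(g^v)^2 = g^(2*v)" by (simp add: power_mult[symmetric] mult.commute)
    also have "\<dots> = g^0" using gpow[of "2*v" 0] by simp
    finally have "(g^v)^2 = 1" by simp
    then have "g^v = 1 \<or> g^v = -1" by (simp add: power2_eq_1_iff)
    moreover have "g^v \<noteq> 1"
    proof
      assume "g^v = 1"
      then have "g^v = g^0" by simp
      then have "v mod (2*v) = 0 mod (2*v)" using gpow by blast
      then show False using vpos by simp
    qed
    ultimately show ?thesis by blast
  qed
  have memV: "g^a \<in> V \<longleftrightarrow> even a" for a
  proof
    assume "g^a \<in> V"
    then obtain n where "g^a = h^n" unfolding V_def by auto
    then have "a mod (2*v) = (2*n) mod (2*v)" using gpow hg by simp
    then have "a mod (2*v) mod 2 = (2*n) mod (2*v) mod 2" by simp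
    then have "a mod 2 = (2*n) mod 2" by (simp add: mod_mod_cancel)
    then show "even a" by (simp add: even_iff_mod_2_eq_zero)
  next
    assume "even a"
    then have "g^a = h^(a div 2)" using hg by simp
    then show "g^a \<in> V" unfolding V_def by simp
  qed
  have HS: "half_set V"
    unfolding half_set_def
  proof (intro conjI allI impI)
    show "0 \<notin> V" unfolding V_def using h0 by auto
    fix x :: 'a assume "x \<noteq> 0"
    then obtain a where a: "x = g^a" using gen by blast
    have "-x = g^(a+v)" unfolding a by (simp add: power_add gv)
    then have "-x \<in> V \<longleftrightarrow> even (a+v)" using memV by simp
    moreover have "x \<in> V \<longleftrightarrow> even a" using memV a by simp
    ultimately show "x \<in> V \<longleftrightarrow> -x \<notin> V" using vodd by auto
  qed
  have HSY: "heffter_system V (ks!i) (P i)" if "i < length ks" for i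
  proof -
    have "ks!i \<in> set ks" using that by simp
    then have "ks!i dvd v" "ks!i \<ge> 2" using kdv ksodd by auto
    then show ?thesis unfolding V_def P_def by (rule cls_hs)
  qed
  have PLS: "B1 = B2" if xy: "x \<noteq> y" and B1: "B1 \<in> (\<Union>i<length ks. P i)" and B2: "B2 \<in> (\<Union>i<length ks. P i)"
     and xB1: "x \<in> B1" and yB1: "y \<in> B1" and xB2: "x \<in> B2" and yB2: "y \<in> B2" for x y B1 B2
  proof -
    obtain i1 where i1: "i1 < length ks" "B1 \<in> P i1" using B1 by blast
    obtain i2 where i2: "i2 < length ks" "B2 \<in> P i2" using B2 by blast
    show ?thesis
    proof (cases "i1 = i2")
      case True
      have "partition_on V (P i1)" using HSY[OF i1(1)] unfolding heffter_system_def by blast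
      then have "disjoint (P i1)" unfolding partition_on_def by blast
      moreover have "B2 \<in> P i1" using i2 True by simp
      moreover have "x \<in> B1 \<inter> B2" using xB1 xB2 by blast
      ultimately show ?thesis using i1(2) unfolding disjoint_def by blast
    next
      case False
      define k1 where "k1 = ks!i1"
      define k2 where "k2 = ks!i2"
      have "k1 * k2 dvd v" unfolding k1_def k2_def v_def using i1(1) i2(1) False by (rule prod2_dvd)
      then obtain u where u: "v = k1 * k2 * u" by blast
      have k1pos: "k1 > 0" using u vpos by (metis gr0I mult_0)
      have k2pos: "k2 > 0" using u vpos by (metis gr0I mult_0 mult_0_right)
      have w1: "v div k1 = k2 * u" using u k1pos by simp
      have w2: "v div k2 = k1 * u" using u k2pos by (simp add: mult.commute mult.left_commute)
      have cp: "coprime k1 k2" unfolding k1_def k2_def using cop i1(1) i2(1) False by blast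
      obtain m1 where m1: "B1 = blk h (k2*u) m1" using i1(2) unfolding P_def cls_def k1_def[symmetric] w1 by blast
      obtain m2 where m2: "B2 = blk h (k1*u) m2" using i2(2) unfolding P_def cls_def k2_def[symmetric] w2 by blast
      have d1: "k2*u dvd v" using u by simp
      have d2: "k1*u dvd v" using u by (simp add: mult.commute mult.left_commute)
      obtain a where a: "x = h^a" using xB1 m1 blk_sub by blast
      obtain b where b: "y = h^b" using yB1 m1 blk_sub by blast
      have "a mod (k2*u) = m1 mod (k2*u)" using xB1 unfolding m1 a by (simp only: memblk[OF d1])
      moreover have "b mod (k2*u) = m1 mod (k2*u)" using yB1 unfolding m1 b by (simp only: memblk[OF d1])
      ultimately have e1: "a mod (k2*u) = b mod (k2*u)" by simp
      have "a mod (k1*u) = m2 mod (k1*u)" using xB2 unfolding m2 a by (simp only: memblk[OF d2])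
      moreover have "b mod (k1*u) = m2 mod (k1*u)" using yB2 unfolding m2 b by (simp only: memblk[OF d2])
      ultimately have e2: "a mod (k1*u) = b mod (k1*u)" by simp
      have "a mod v = b mod v" unfolding u by (rule crt_aux[OF cp e1 e2])
      then have "x = y" unfolding a b using hpow by simp
      then show ?thesis using xy by simp
    qed
  qed
  have "heffter_space V ks P"
    unfolding heffter_space_def using HS HSY PLS by blast
  then show ?thesis by blast
qed

end
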